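(* If $x=x_1\cdots x_n\in\mathrm{Sort}_n(123,321)$, then $x_1\in\{n-1,n\}$.
   Context: A permutation contains a pattern $p$ if it has a subsequence order-isomorphic to $p$; otherwise it avoids $p$. For a set $T$ of patterns, the map $s_T$ is defined as follows: the entries of the input permutation are read from left to right, with an initially empty stack. At each step, if the input is nonempty and pushing the next input entry onto the stack produces a stack whose contents, read from top to bottom, avoid every pattern in $T$, that entry is pushed; otherwise the top entry of the stack is popped and appended to the output. When the input is exhausted, the remaining stack entries are popped one at a time to the output. Write $s_{\sigma,\tau}=s_{\{\sigma,\tau\}}$ and $s=s_{\{21\}}$ (West's stack-sorting map). $\mathrm{Sort}_n(\sigma,\tau)$ is the set of $x\in S_n$ with $s(s_{\sigma,\tau}(x))=12\cdots n$. *)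

theory Defs
  imports "HOL-Library.Sublist"
begin

definition perm_of :: "nat \<Rightarrow> nat list \<Rightarrow> bool" where
  "perm_of n x \<longleftrightarrow> distinct x \<and> set x = {1..n}"

definition order_iso :: "nat list \<Rightarrow> nat list \<Rightarrow> bool" where
  "order_iso ys p \<longleftrightarrow> length ys = length p \<and>
     (\<forall>i<length ys. \<forall>j<length ys. (ys ! i < ys ! j \<longleftrightarrow> p ! i < p ! j))"

definition contains :: "nat list \<Rightarrow> nat list \<Rightarrow> bool" where
  "contains xs p \<longleftrightarrow> (\<exists>ys. subseq ys xs \<and> order_iso ys p)"

definition avoids_all :: "nat list set \<Rightarrow> nat list \<Rightarrow> bool" where
  "avoids_all T xs \<longleftrightarrow> (\<forall>p\<in>T. \<not> contains xs p)"

text \<open>Stack machine: input, stack (head = top); returns the output word.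
  When the stack is empty, the next entry is pushed (a one-entry stack avoids
  every pattern of length at least 2, so this is the only sensible reading).\<close>

function stack_run :: "nat list set \<Rightarrow> nat list \<Rightarrow> nat list \<Rightarrow> nat list" where
  "stack_run T [] st = st"
| "stack_run T (a # inp) st =
     (if st = [] \<or> avoids_all T (a # st) then stack_run T inp (a # st)
      else hd st # stack_run T (a # inp) (tl st))"
  by pat_completeness auto
termination
  by (relation "measure (\<lambda>(T, inp, st). 2 * length inp + length st)") auto

definition sT :: "nat list set \<Rightarrow> nat list \<Rightarrow> nat list" where
  "sT T x = stack_run T x []"

definition s_pair :: "nat list \<Rightarrow> nat list \<Rightarrow> nat list \<Rightarrow> nat list" where
  "s_pair \<sigma> \<tau> = sT {\<sigma>, \<tau>}"

definition west_s :: "nat list \<Rightarrow> nat list" where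
  "west_s = sT {[2,1]}"

definition Sort :: "nat \<Rightarrow> nat list \<Rightarrow> nat list \<Rightarrow> nat list set" where
  "Sort n \<sigma> \<tau> = {x. perm_of n x \<and> west_s (s_pair \<sigma> \<tau> x) = [1..<n+1]}"

end

theory Submission
  imports Defs "HOL-Library.Multiset"
begin


abbreviation "TT \<equiv> {[1,2,3],[3,2,1]} :: nat list set"

lemma subseq_Cons_iff: "subseq (u#us) (x#xs) \<longleftrightarrow> (u = x \<and> subseq us xs) \<or> subseq (u#us) xs"
  by (auto dest: subseq_Cons')

lemma sorted_wrt_subseq: "subseq xs ys \<Longrightarrow> sorted_wrt R ys \<Longrightarrow> sorted_wrt R xs"
  by (induct rule: list_emb.induct) (auto dest: list_emb_set)

lemma len3: "length ys = 3 \<Longrightarrow> ys = [ys!0, ys!1, ys!2]"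
  by (cases ys; cases "tl ys"; cases "tl (tl ys)") (auto simp: numeral_3_eq_3)

lemma oi_iff: "order_iso [u,v,w] p \<longleftrightarrow> length p = 3 \<and> (\<forall>i<3. \<forall>j<3. ([u,v,w] ! i < [u,v,w] ! j \<longleftrightarrow> p ! i < p ! j))"
  unfolding order_iso_def by (simp add: numeral_3_eq_3 eq_commute)

lemma all3: "(\<forall>i<(3::nat). P i) \<longleftrightarrow> P 0 \<and> P 1 \<and> P 2"
  by (auto simp: numeral_3_eq_3 less_Suc_eq numeral_2_eq_2)

lemma oi123: "order_iso ys [1,2,3] \<longleftrightarrow> (\<exists>u v w. ys = [u,v,w] \<and> u < v \<and> v < w)"
proof
  assume h: "order_iso ys [1,2,3]"
  then have "length ys = 3" by (simp add: order_iso_def)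
  then have ys: "ys = [ys!0, ys!1, ys!2]" by (rule len3)
  from h have "order_iso [ys!0, ys!1, ys!2] [1,2,3]" using ys by simp
  then have "ys!0 < ys!1 \<and> ys!1 < ys!2" unfolding oi_iff all3 by simp
  with ys show "\<exists>u v w. ys = [u,v,w] \<and> u < v \<and> v < w" by blast
next
  assume "\<exists>u v w. ys = [u,v,w] \<and> u < v \<and> v < w"
  then obtain u v w where "ys = [u,v,w]" "u < v" "v < w" by blast
  moreover have "order_iso [u,v,w] [1,2,3]" unfolding oi_iff all3 using \<open>u < v\<close> \<open>v < w\<close> by simp
  ultimately show "order_iso ys [1,2,3]" by simp
qed

lemma oi321: "order_iso ys [3,2,1] \<longleftrightarrow> (\<exists>u v w. ys = [u,v,w] \<and> u > v \<and> v > w)"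
proof
  assume h: "order_iso ys [3,2,1]"
  then have "length ys = 3" by (simp add: order_iso_def)
  then have ys: "ys = [ys!0, ys!1, ys!2]" by (rule len3)
  from h have "order_iso [ys!0, ys!1, ys!2] [3,2,1]" using ys by simp
  then have "ys!0 > ys!1 \<and> ys!1 > ys!2" unfolding oi_iff all3 by simp
  with ys show "\<exists>u v w. ys = [u,v,w] \<and> u > v \<and> v > w" by blast
next
  assume "\<exists>u v w. ys = [u,v,w] \<and> u > v \<and> v > w"
  then obtain u v w where "ys = [u,v,w]" "u > v" "v > w" by blast
  moreover have "order_iso [u,v,w] [3,2,1]" unfolding oi_iff all3 using \<open>u > v\<close> \<open>v > w\<close> by simp
  ultimately show "order_iso ys [3,2,1]" by simp
qed

definition mono3 :: "nat list \<Rightarrow> bool" where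
  "mono3 xs \<longleftrightarrow> (\<exists>u v w. subseq [u,v,w] xs \<and> (u < v \<and> v < w \<or> u > v \<and> v > w))"

lemma avoidsTT: "avoids_all TT xs \<longleftrightarrow> \<not> mono3 xs"
proof -
  have "contains xs [1,2,3] \<or> contains xs [3,2,1] \<longleftrightarrow> mono3 xs"
    unfolding contains_def mono3_def oi123 oi321 by blast
  then show ?thesis unfolding avoids_all_def by auto
qed

lemma mono3_Nil[simp]: "\<not> mono3 []" by (simp add: mono3_def)

lemma mono3_Cons: "mono3 (x#xs) \<longleftrightarrow> mono3 xs \<or> (\<exists>v w. subseq [v,w] xs \<and> (x < v \<and> v < w \<or> x > v \<and> v > w))"
  unfolding mono3_def subseq_Cons_iff by blast

lemma sub2_Cons: "subseq [v,w] (x#xs) \<longleftrightarrow> (v = x \<and> w \<in> set xs) \<or> subseq [v,w] xs"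
  unfolding subseq_Cons_iff subseq_singleton_left by blast
lemma sub2_Nil: "\<not> subseq [v,w] []" by simp

lemma w21: "(q::nat) > p \<Longrightarrow> p \<in> set st \<Longrightarrow> \<not> avoids_all {[2,1]} (q # st)"
proof -
  assume a: "q > p" "p \<in> set st"
  have "subseq [q,p] (q # st)" using a(2) by (simp add: subseq_singleton_left)
  moreover have "order_iso [q,p] [2,1]" using a(1) unfolding order_iso_def by (auto simp: less_Suc_eq)
  ultimately show ?thesis unfolding avoids_all_def contains_def by blast
qed



fun pops :: "nat list set \<Rightarrow> nat \<Rightarrow> nat list \<Rightarrow> nat list" where
  "pops T c [] = []"
| "pops T c (h # t) = (if avoids_all T (c # h # t) then [] else h # pops T c t)"

definition nst :: "nat list set \<Rightarrow> nat \<Rightarrow> nat list \<Rightarrow> nat list" where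
  "nst T c st = c # drop (length (pops T c st)) st"

lemma stack_run_step: "stack_run T (a # inp) st =
     (if st = [] \<or> avoids_all T (a # st) then stack_run T inp (a # st)
      else hd st # stack_run T (a # inp) (tl st))"
  by (rule stack_run.simps(2))

declare stack_run.simps(2)[simp del]

lemma run_cons: "stack_run T (c # inp) st = pops T c st @ stack_run T inp (nst T c st)"
  unfolding nst_def
proof (induct st)
  case Nil then show ?case by (subst stack_run_step) simp
next
  case (Cons h t) then show ?case by (subst stack_run_step) simp
qed

lemma pops_take: "pops T c st = take (length (pops T c st)) st"
  by (induct st) auto

lemma pops_append: "length (pops T c (xs @ ys)) \<ge> length xs \<Longrightarrow> pops T c (xs @ ys) = xs @ pops T c ys"
  by (induct xs) (auto split: if_splits)

lemma pushed_ok: "drop (length (pops T c st)) st = [] \<or> avoids_all T (c # drop (length (pops T c st)) st)"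
  by (induct st) auto

lemma stack_run_subseq: "subseq st (stack_run T inp st)"
proof (induct T inp st rule: stack_run.induct)
  case (1 T st) then show ?case by simp
next
  case (2 T a inp st)
  show ?case
  proof (cases "st = [] \<or> avoids_all T (a # st)")
    case True
    then have e: "stack_run T (a # inp) st = stack_run T inp (a # st)" by (subst stack_run_step) simp
    show ?thesis unfolding e using 2(1)[OF True] by (metis subseq_Cons')
  next
    case False
    then have "subseq (tl st) (stack_run T (a # inp) (tl st))" using 2(2) by blast
    then have "subseq (hd st # tl st) (hd st # stack_run T (a # inp) (tl st))" by simp
    moreover have "stack_run T (a # inp) st = hd st # stack_run T (a # inp) (tl st)" using False by (subst stack_run_step) simp
    moreover have "st = hd st # tl st" using False by simp
    ultimately show ?thesis by metis
  qed
qed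

lemma stack_run_mset: "mset (stack_run T inp st) = mset inp + mset st"
proof (induct T inp st rule: stack_run.induct)
  case (1 T st) then show ?case by simp
next
  case (2 T a inp st)
  show ?case
  proof (cases "st = [] \<or> avoids_all T (a # st)")
    case True
    then have e: "stack_run T (a # inp) st = stack_run T inp (a # st)" by (subst stack_run_step) simp
    show ?thesis unfolding e using 2(1)[OF True] by simp
  next
    case False
    then have "mset (stack_run T (a # inp) (tl st)) = mset (a # inp) + mset (tl st)" using 2(2) by blast
    moreover have "st = hd st # tl st" using False by simp
    moreover have "stack_run T (a # inp) st = hd st # stack_run T (a # inp) (tl st)" using False by (subst stack_run_step) simp
    ultimately show ?thesis by (metis mset.simps(2) union_mset_add_mset_right add_mset_add_single)
  qed
qed

fun run_out :: "nat list set \<Rightarrow> nat list \<Rightarrow> nat list \<Rightarrow> nat list \<times> nat list" where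
  "run_out T [] st = ([], st)"
| "run_out T (c # inp) st = (let r = run_out T inp (nst T c st) in (pops T c st @ fst r, snd r))"

lemma run_out_append: "stack_run T (L @ R) st = fst (run_out T L st) @ stack_run T R (snd (run_out T L st))"
  by (induct L arbitrary: st) (auto simp: run_cons Let_def)

lemma nst_mset: "mset (pops T c st) + mset (nst T c st) = {#c#} + mset st"
proof -
  have "pops T c st @ drop (length (pops T c st)) st = st"
    by (metis append_take_drop_id pops_take)
  then have "mset (pops T c st) + mset (drop (length (pops T c st)) st) = mset st"
    by (metis mset_append)
  then show ?thesis unfolding nst_def by simp
qed

lemma run_out_mset: "mset (fst (run_out T L st)) + mset (snd (run_out T L st)) = mset L + mset st"
proof (induct L arbitrary: st)
  case Nil then show ?case by simp
next
  case (Cons c L)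
  let ?r = "run_out T L (nst T c st)"
  have IH: "mset (fst ?r) + mset (snd ?r) = mset L + mset (nst T c st)"
    by (rule Cons)
  have "mset (fst (run_out T (c # L) st)) + mset (snd (run_out T (c # L) st))
      = mset (pops T c st) + (mset (fst ?r) + mset (snd ?r))" by (simp add: Let_def)
  also have "\<dots> = mset L + (mset (pops T c st) + mset (nst T c st))" using IH by (simp add: ac_simps)
  also have "\<dots> = mset (c # L) + mset st" using nst_mset[of T c st] by simp
  finally show ?case .
qed

lemma run_out_inv:
  assumes "I st0" and "\<And>st c. I st \<Longrightarrow> c \<in> set L \<Longrightarrow> I (nst T c st)"
  shows "I (snd (run_out T L st0))"
  using assms by (induct L arbitrary: st0) (auto simp: Let_def)


abbreviation "WW \<equiv> {[2,1]} :: nat list set"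

lemma westP: "p \<in> set st \<Longrightarrow> subseq [q,r] inp \<Longrightarrow> r < p \<Longrightarrow> p < q \<Longrightarrow> subseq [p,r] (stack_run WW inp st)"
proof (induct inp arbitrary: st)
  case Nil then show ?case by simp
next
  case (Cons c inp)
  show ?case
  proof (cases "p \<in> set (pops WW c st)")
    case True
    have "subseq [r] inp" using Cons.prems(2) unfolding subseq_Cons_iff[of q "[r]" c inp] by (metis subseq_Cons')
    then have "r \<in> set inp" by (simp add: subseq_singleton_left)
    then have "r \<in> set (stack_run WW inp (nst WW c st))" using stack_run_mset
      by (metis Un_iff set_mset_mset set_mset_union)
    then have "subseq ([p] @ [r]) (pops WW c st @ stack_run WW inp (nst WW c st))"
      using True by (intro list_emb_append_mono) (simp_all add: subseq_singleton_left)
    then show ?thesis by (simp add: run_cons)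
  next
    case False
    have pin: "p \<in> set (drop (length (pops WW c st)) st)" using Cons.prems(1) False
      by (metis Un_iff append_take_drop_id pops_take set_append)
    have "c \<noteq> q"
    proof
      assume "c = q"
      then have "\<not> avoids_all WW (c # drop (length (pops WW c st)) st)" using w21 pin Cons.prems by blast
      then show False using pushed_ok[of WW c st] pin by auto
    qed
    then have "subseq [q,r] inp" using Cons.prems(2) by (auto simp: subseq_Cons_iff simp del: subseq_Cons2_iff)
    moreover have "p \<in> set (nst WW c st)" using pin by (simp add: nst_def)
    ultimately have "subseq [p,r] (stack_run WW inp (nst WW c st))" using Cons by blast
    then show ?thesis by (simp add: run_cons subseq_drop_many)
  qed
qed

lemma westQ: "subseq [p,q,r] inp \<Longrightarrow> r < p \<Longrightarrow> p < q \<Longrightarrow> subseq [p,r] (stack_run WW inp st)"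
proof (induct inp arbitrary: st)
  case Nil then show ?case by simp
next
  case (Cons c inp)
  show ?case
  proof (cases "c = p \<and> subseq [q,r] inp")
    case True
    then have "subseq [p,r] (stack_run WW inp (nst WW c st))" using westP[of p "nst WW c st" q r inp] Cons.prems
      by (simp add: nst_def)
    then show ?thesis by (simp add: run_cons subseq_drop_many)
  next
    case False
    then have "subseq [p,q,r] inp" using Cons.prems(1) by (auto simp: subseq_Cons_iff simp del: subseq_Cons2_iff)
    then show ?thesis using Cons by (simp add: run_cons subseq_drop_many)
  qed
qed

lemma west231: "subseq [p,q,r] y \<Longrightarrow> r < p \<Longrightarrow> p < q \<Longrightarrow> west_s y \<noteq> [1..<n+1]"
proof
  assume "subseq [p,q,r] y" "r < p" "p < q" "west_s y = [1..<n+1]"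
  then have "subseq [p,r] [1..<n+1]" using westQ unfolding west_s_def sT_def by metis
  then have "sorted_wrt (<) [p,r]" using sorted_wrt_subseq sorted_wrt_upt by blast
  with \<open>r < p\<close> show False by simp
qed



lemma avoidsTT': "avoids_all {[Suc 0,2,3],[3,2,Suc 0]} xs \<longleftrightarrow> \<not> mono3 xs"
  using avoidsTT[of xs] by simp

lemma mono3_len: "length xs < 3 \<Longrightarrow> \<not> mono3 xs"
  unfolding mono3_def by (auto dest: list_emb_length)

lemma mono3_2[simp]: "\<not> mono3 [c,d]" by (rule mono3_len) simp

lemma mono3_3: "mono3 [p,q,r] \<longleftrightarrow> (p < q \<and> q < r \<or> p > q \<and> q > r)"
  unfolding mono3_def by (auto dest: subseq_same_length)

lemma sub2_3: "subseq [v,w] [q,r,t] \<longleftrightarrow> (v = q \<and> w = r) \<or> (v = q \<and> w = t) \<or> (v = r \<and> w = t)"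
  unfolding sub2_Cons by (simp del: subseq_Cons2_iff) blast

lemma mono3_4: "mono3 [p,q,r,t] \<longleftrightarrow> mono3 [q,r,t] \<or> mono3 [p,r,t] \<or> mono3 [p,q,t] \<or> mono3 [p,q,r]"
  unfolding mono3_Cons[of p] sub2_3 mono3_3 by blast

lemma mono3_I: "subseq [u,v,w] xs \<Longrightarrow> u < v \<and> v < w \<or> u > v \<and> v > w \<Longrightarrow> mono3 xs"
  unfolding mono3_def by blast

lemma pops_short: "st \<noteq> [] \<Longrightarrow> length (pops TT c st) < length st"
proof (induct st)
  case Nil then show ?case by simp
next
  case (Cons h t)
  show ?case
  proof (cases "t = []")
    case True then show ?thesis by (simp add: avoidsTT avoidsTT')
  next
    case False then show ?thesis using Cons by simp
  qed
qed

lemma nst_drop_ne: "st \<noteq> [] \<Longrightarrow> drop (length (pops TT c st)) st \<noteq> []"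
  using pops_short[of st c] by simp

lemma nst_last: "st \<noteq> [] \<Longrightarrow> nst TT c st \<noteq> [] \<and> last (nst TT c st) = last st"
  unfolding nst_def using nst_drop_ne[of st c] pops_short[of st c] by (simp add: last_drop)

lemma nst_avoid: "st \<noteq> [] \<Longrightarrow> \<not> mono3 (nst TT c st)"
  using pushed_ok[of TT c st] nst_drop_ne[of st c] unfolding nst_def avoidsTT by simp

lemma nst_keep0: "B \<noteq> [] \<Longrightarrow> \<not> mono3 (c # B) \<Longrightarrow> nst TT c B = c # B"
  unfolding nst_def by (cases B) (simp_all add: avoidsTT avoidsTT')

lemma nst_G2: "(\<exists>T''. nst TT c (T' @ B) = c # T'' @ B \<and> set T'' \<subseteq> set T') \<or> nst TT c (T' @ B) = nst TT c B"
proof (cases "length (pops TT c (T' @ B)) \<ge> length T'")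
  case True
  then have "pops TT c (T' @ B) = T' @ pops TT c B" by (rule pops_append)
  then have "nst TT c (T' @ B) = nst TT c B" unfolding nst_def by simp
  then show ?thesis by blast
next
  case False
  let ?k = "length (pops TT c (T' @ B))"
  have "drop ?k (T' @ B) = drop ?k T' @ B" using False by simp
  moreover have "set (drop ?k T') \<subseteq> set T'" by (rule set_drop_subset)
  ultimately show ?thesis unfolding nst_def by blast
qed

lemma nst_keep: "B \<noteq> [] \<Longrightarrow> \<not> mono3 (c # B) \<Longrightarrow> \<exists>T''. nst TT c (T' @ B) = c # T'' @ B \<and> set T'' \<subseteq> set T'"
  using nst_G2[of c T' B] nst_keep0[of B c] by (metis append.left_neutral empty_subsetI set_empty)

lemma subseq_last2: "y \<in> set xs \<Longrightarrow> y \<noteq> last xs \<Longrightarrow> subseq [y, last xs] xs"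
proof (induct xs)
  case Nil then show ?case by simp
next
  case (Cons h t)
  show ?case
  proof (cases "t = []")
    case True then show ?thesis using Cons by simp
  next
    case False
    then have lt: "last (h # t) = last t" by simp
    show ?thesis
    proof (cases "y = h")
      case True
      then show ?thesis using False lt by (simp add: subseq_singleton_left)
    next
      case yh: False
      then have "subseq [y, last t] t" using Cons False by simp
      then show ?thesis using lt by (metis list_emb_Cons)
    qed
  qed
qed

lemma subseq_cons_app: "x \<in> set A \<Longrightarrow> subseq ys B \<Longrightarrow> subseq (x # ys) (A @ B)"
  using list_emb_append_mono[of "(=)" "[x]" A ys B] by (simp add: subseq_singleton_left)

lemma mset_distinct: "mset A + mset B = mset C \<Longrightarrow> distinct C \<Longrightarrow> distinct B \<and> set A \<inter> set B = {} \<and> set A \<union> set B = set C"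
proof -
  assume m: "mset A + mset B = mset C" and d: "distinct C"
  then have "mset (A @ B) = mset C" by simp
  then have "distinct (A @ B)" "set (A @ B) = set C" using d mset_eq_imp_distinct_iff mset_eq_setD by blast+
  then show ?thesis by auto
qed



lemma mset_set_eq: "mset A + mset B = mset C \<Longrightarrow> set A \<union> set B = set C"
  by (metis set_mset_mset set_mset_union)

lemma west_contra: "subseq [p,q,r] st \<Longrightarrow> r < p \<Longrightarrow> p < q \<Longrightarrow> west_s (Pre @ stack_run TT L st) \<noteq> [1..<n+1]"
proof -
  assume a: "subseq [p,q,r] st" "r < p" "p < q"
  have "subseq [p,q,r] (stack_run TT L st)" using a(1) stack_run_subseq by (rule subseq_order.trans)
  then have "subseq [p,q,r] (Pre @ stack_run TT L st)" by (rule subseq_drop_many)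
  then show ?thesis using west231 a(2,3) by blast
qed

lemma nst_pop2: "c < s \<Longrightarrow> s < a \<Longrightarrow> a < n \<Longrightarrow> nst TT c [n,s,a] = [c,a]"
  unfolding nst_def by (simp add: avoidsTT' mono3_4 mono3_3)

lemma nst_pop1: "c < u \<Longrightarrow> u < a \<Longrightarrow> nst TT c [u,a] = [c,a]"
  unfolding nst_def by (simp add: avoidsTT' mono3_3)

definition Inv2 :: "nat \<Rightarrow> nat \<Rightarrow> nat \<Rightarrow> nat list \<Rightarrow> bool" where
  "Inv2 n s a st \<longleftrightarrow> (\<exists>T'. st = T' @ [n,s,a]) \<or> (\<exists>W u. st = W @ [u,a] \<and> u < s \<and> s \<notin> set st)"

lemma Inv2_step:
  assumes "Inv2 n s a st" "c < a" "c \<noteq> s" "s < a" "a < n"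
  shows "Inv2 n s a (nst TT c st)"
  using assms(1) unfolding Inv2_def
proof (elim disjE exE conjE)
  fix T' assume st: "st = T' @ [n,s,a]"
  show "(\<exists>T'. nst TT c st = T' @ [n,s,a]) \<or> (\<exists>W u. nst TT c st = W @ [u,a] \<and> u < s \<and> s \<notin> set (nst TT c st))"
  proof (cases "\<exists>T''. nst TT c (T' @ [n,s,a]) = c # T'' @ [n,s,a] \<and> set T'' \<subseteq> set T'")
    case True then show ?thesis unfolding st by (metis append_Cons)
  next
    case False
    then have e: "nst TT c st = nst TT c [n,s,a]" using nst_G2[of c T' "[n,s,a]"] st by blast
    show ?thesis
    proof (cases "mono3 [c,n,s,a]")
      case False
      then have "nst TT c st = [c] @ [n,s,a]" using e nst_keep0[of "[n,s,a]" c] by simp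
      then show ?thesis by blast
    next
      case True
      then have "c < s" using assms unfolding mono3_4 mono3_3 by auto
      then have "nst TT c st = [] @ [c,a]" using e nst_pop2 assms by simp
      then show ?thesis using \<open>c < s\<close> assms by auto
    qed
  qed
next
  fix W u assume st: "st = W @ [u,a]" and us: "u < s" and sn: "s \<notin> set st"
  show "(\<exists>T'. nst TT c st = T' @ [n,s,a]) \<or> (\<exists>W u. nst TT c st = W @ [u,a] \<and> u < s \<and> s \<notin> set (nst TT c st))"
  proof (cases "\<exists>T''. nst TT c (W @ [u,a]) = c # T'' @ [u,a] \<and> set T'' \<subseteq> set W")
    case True
    then obtain T'' where t: "nst TT c st = (c # T'') @ [u,a]" "set T'' \<subseteq> set W" using st by auto
    have "s \<notin> set (nst TT c st)" using t sn st assms(3) by auto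
    then show ?thesis using t us by blast
  next
    case False
    then have e: "nst TT c st = nst TT c [u,a]" using nst_G2[of c W "[u,a]"] st by blast
    show ?thesis
    proof (cases "mono3 [c,u,a]")
      case False
      then have "nst TT c st = [c] @ [u,a]" using e nst_keep0[of "[u,a]" c] by simp
      moreover have "s \<notin> set (nst TT c st)" using calculation sn st assms(3) by auto
      ultimately show ?thesis using us by blast
    next
      case True
      then have "c < u" using assms us unfolding mono3_3 by auto
      then have "nst TT c st = [] @ [c,a]" using e nst_pop1 assms us by simp
      then show ?thesis using \<open>c < u\<close> us assms by auto
    qed
  qed
qed

lemma Inv1_step:
  assumes "\<exists>T'. st = T' @ [n,a]" "c < a" "a < n"
  shows "\<exists>T'. nst TT c st = T' @ [n,a]"
proof -
  obtain T' where st: "st = T' @ [n,a]" using assms by blast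
  have "\<not> mono3 [c,n,a]" using assms unfolding mono3_3 by auto
  then obtain T'' where "nst TT c st = c # T'' @ [n,a]" using nst_keep[of "[n,a]" c T'] st by auto
  then show ?thesis by (metis append_Cons)
qed



theorem lemma4p2:
  fixes n :: nat and x :: "nat list"
  assumes "n \<ge> 1" and "x \<in> Sort n [1,2,3] [3,2,1]"
  shows "x ! 0 \<in> {n - 1, n}"
proof (rule ccontr)
  assume contra: "x ! 0 \<notin> {n - 1, n}"
  from assms(2) have perm: "distinct x" "set x = {1..n}" and ws: "west_s (stack_run TT x []) = [1..<n+1]"
    unfolding Sort_def perm_of_def s_pair_def sT_def by auto
  have "x \<noteq> []" using perm(2) assms(1) by auto
  then obtain a rest where x: "x = a # rest" by (cases x) auto
  have a_range: "a \<in> {1..n}" using perm x by auto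
  have an: "a + 2 \<le> n" using contra x a_range by auto
  have "stack_run TT x [] = stack_run TT rest [a]" unfolding x by (subst stack_run_step) simp
  define y where "y = stack_run TT rest [a]"
  have ws': "west_s y = [1..<n+1]" using ws \<open>stack_run TT x [] = _\<close> y_def by simp
  have "n \<in> set x" using perm assms(1) by auto
  then have "n \<in> set rest" using x an by auto
  then obtain L1 R where rest: "rest = L1 @ n # R" by (meson split_list)
  have dx: "distinct (a # L1 @ n # R)" using perm x rest by simp
  have setx: "set (a # L1 @ n # R) = {1..n}" using perm x rest by simp
  define O1 where "O1 = fst (run_out TT L1 [a])"
  define S1 where "S1 = snd (run_out TT L1 [a])"
  have S1ne: "S1 \<noteq> [] \<and> last S1 = a" unfolding S1_def
    by (rule run_out_inv[where I = "\<lambda>st. st \<noteq> [] \<and> last st = a"]) (auto dest: nst_last)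
  have mset1: "mset O1 + mset S1 = mset (L1 @ [a])" using run_out_mset[of TT L1 "[a]"] O1_def S1_def by simp
  have "distinct (L1 @ [a])" using dx by auto
  then have dS1: "distinct S1" and setS1: "set O1 \<union> set S1 = set L1 \<union> {a}"
    using mset_distinct[OF mset1] by auto
  define P1 where "P1 = pops TT n S1"
  define S1' where "S1' = drop (length P1) S1"
  have N: "nst TT n S1 = n # S1'" unfolding nst_def P1_def S1'_def by simp
  have S1'ne: "S1' \<noteq> [] \<and> last S1' = a" using nst_drop_ne[of S1 n] S1ne pops_short[of S1 n]
    unfolding S1'_def P1_def by (simp add: last_drop)
  have av: "\<not> mono3 (n # S1')" using nst_avoid[of S1 n] S1ne N by simp
  have S1split: "P1 @ S1' = S1" unfolding S1'_def P1_def by (metis append_take_drop_id pops_take)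
  have yeq: "y = O1 @ P1 @ stack_run TT R (n # S1')"
    unfolding y_def rest run_out_append O1_def[symmetric] S1_def[symmetric] run_cons N P1_def ..
  have aS1': "a \<in> set S1'" using S1'ne by (metis last_in_set)
  have nL1: "n \<notin> set L1" using dx by auto
  show False
  proof (cases "\<exists>b'\<in>set L1. b' > a")
    case True
    then obtain b' where b': "b' \<in> set L1" "b' > a" by blast
    have "b' \<in> set x" using b' x rest by simp
    then have "b' \<le> n" using perm by auto
    moreover have "b' \<noteq> n" using b' nL1 by auto
    ultimately have bn: "b' < n" by simp
    have "b' \<notin> set S1'"
    proof
      assume "b' \<in> set S1'"
      then have "subseq [b', a] S1'" using subseq_last2[of b' S1'] S1'ne b' by auto
      then have "subseq [n, b', a] (n # S1')" by simp
      then have "mono3 (n # S1')" using bn b' by (intro mono3_I[of n b' a]) auto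
      then show False using av by simp
    qed
    then have "b' \<in> set (O1 @ P1)" using setS1 b' S1split by auto
    moreover have "subseq [n,a] (stack_run TT R (n # S1'))"
    proof -
      have "subseq [n,a] (n # S1')" using aS1' by (simp add: subseq_singleton_left)
      then show ?thesis using stack_run_subseq[of "n # S1'" TT R] by (rule subseq_order.trans)
    qed
    ultimately have "subseq [b',n,a] ((O1 @ P1) @ stack_run TT R (n # S1'))" by (rule subseq_cons_app)
    then have "subseq [b',n,a] y" using yeq by (metis append_assoc)
    then show False using west231[of b' n a y n] ws' b'(2) bn by simp
  next
    case False
    then have L1le: "\<forall>v\<in>set L1. v \<le> a" by auto
    have "distinct (P1 @ S1')" using dS1 S1split by simp
    then have dS1': "distinct S1'" by simp
    have "set S1 = set P1 \<union> set S1'" using S1split by (metis set_append)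
    then have S1'sub: "set S1' \<subseteq> set L1 \<union> {a}" using setS1 by blast
    then have S1'le: "\<forall>v\<in>set S1'. v \<le> a" using L1le by auto
    have struct: "S1' = [a] \<or> (\<exists>s. S1' = [s,a] \<and> s < a)"
    proof -
      obtain p t where pt: "S1' = p # t" using S1'ne by (cases S1') auto
      show ?thesis
      proof (cases t)
        case Nil then show ?thesis using pt S1'ne by simp
      next
        case (Cons q t2)
        show ?thesis
        proof (cases t2)
          case Nil
          then have "q = a" using pt Cons S1'ne by simp
          moreover have "p \<noteq> q" using dS1' pt Cons by simp
          moreover have "p \<le> a" using S1'le pt by simp
          ultimately show ?thesis using pt Cons Nil by simp
        next
          case (Cons r t3)
          note t = \<open>t = q # t2\<close>
          have le: "p \<le> a" "q \<le> a" "r \<le> a" using S1'le pt t Cons by auto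
          have ne: "p \<noteq> q" "q \<noteq> r" using dS1' pt t Cons by auto
          have S: "n # S1' = n # p # q # r # t3" using pt t Cons by simp
          have "mono3 (n # S1')"
          proof (cases "q < p")
            case True
            have "subseq [n,p,q] (n # p # q # r # t3)" by simp
            then show ?thesis unfolding S using True le an by (intro mono3_I[of n p q]) auto
          next
            case False
            then have pq: "p < q" using ne by simp
            show ?thesis
            proof (cases "q < r")
              case True
              have "subseq [p,q,r] (n # p # q # r # t3)" by (rule list_emb_Cons) simp
              then show ?thesis unfolding S using True pq by (intro mono3_I[of p q r]) auto
            next
              case False
              then have "r < q" using ne by simp
              have "subseq [q,r] (p # q # r # t3)" by (rule list_emb_Cons) simp
              then have "subseq [n,q,r] (n # p # q # r # t3)" by simp
              then show ?thesis unfolding S using \<open>r < q\<close> le an by (intro mono3_I[of n q r]) auto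
            qed
          qed
          then show ?thesis using av by simp
        qed
      qed
    qed
    have "n - 1 \<in> set R"
    proof -
      have "n - 1 \<in> set (a # L1 @ n # R)" using setx an by auto
      moreover have "n - 1 \<noteq> a" "n - 1 \<noteq> n" using an by auto
      moreover have "n - 1 \<notin> set L1"
      proof
        assume "n - 1 \<in> set L1"
        then have "n - 1 \<le> a" using L1le by blast
        then show False using an by simp
      qed
      ultimately show ?thesis by auto
    qed
    then have "\<exists>v\<in>set R. v > a" using an by (intro bexI[of _ "n - 1"]) auto
    then obtain L2 b L3 where R: "R = L2 @ b # L3" and ba: "b > a" and L2le: "\<forall>f\<in>set L2. \<not> f > a"
      using split_list_first_prop[of R "\<lambda>v. v > a"] by blast
    have "b \<in> set x" using x rest R by simp
    then have "b \<le> n" using perm by auto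
    moreover have "b \<noteq> n" using dx R by auto
    ultimately have bn: "b < n" by simp
    have aL2: "a \<notin> set L2" using dx R by simp
    have L2lt: "\<forall>f\<in>set L2. f < a"
    proof
      fix f assume "f \<in> set L2"
      then have "\<not> f > a" "f \<noteq> a" using L2le aL2 by auto
      then show "f < a" by simp
    qed
    have L2disj: "\<forall>f\<in>set L2. f \<notin> set L1" using dx R by auto
    define F2 where "F2 = fst (run_out TT L2 (n # S1'))"
    define S2 where "S2 = snd (run_out TT L2 (n # S1'))"
    have yeq2: "y = (O1 @ P1 @ F2 @ pops TT b S2) @ stack_run TT L3 (nst TT b S2)"
      unfolding yeq R run_out_append F2_def[symmetric] S2_def[symmetric] run_cons by simp
    have mset2: "mset F2 + mset S2 = mset (L2 @ n # S1')" using run_out_mset[of TT L2 "n # S1'"] F2_def S2_def by simp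
    from struct show False
    proof
      assume S1a: "S1' = [a]"
      have "\<exists>T'. S2 = T' @ [n,a]" unfolding S2_def
      proof (rule run_out_inv[where I = "\<lambda>st. \<exists>T'. st = T' @ [n,a]"])
        show "\<exists>T'. n # S1' = T' @ [n,a]" using S1a by simp
        fix st c assume i: "\<exists>T'. st = T' @ [n,a]" and c: "c \<in> set L2"
        have "c < a" using L2lt c by blast
        moreover have "a < n" using an by simp
        ultimately show "\<exists>T'. nst TT c st = T' @ [n,a]" using i by (intro Inv1_step)
      qed
      then obtain T' where S2: "S2 = T' @ [n,a]" by blast
      have "\<not> mono3 [b,n,a]" using bn ba unfolding mono3_3 by auto
      then obtain T'' where eqn: "nst TT b S2 = b # T'' @ [n,a]" using nst_keep[of "[n,a]" b T'] S2 by auto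
      have sub: "subseq [b,n,a] (b # T'' @ [n,a])" by (rule subseq_Cons2, rule subseq_drop_many, rule subseq_order.refl)
      then have "subseq [b,n,a] (nst TT b S2)" unfolding eqn .
      then have "west_s y \<noteq> [1..<n+1]" unfolding yeq2 by (rule west_contra[OF _ ba bn])
      then show False using ws' by simp
    next
      assume "\<exists>s. S1' = [s,a] \<and> s < a"
      then obtain s where S1s: "S1' = [s,a]" and sa: "s < a" by blast
      have "s \<in> set L1" using S1s S1'sub sa by auto
      then have sL2: "s \<notin> set L2" using L2disj by blast
      have "Inv2 n s a S2" unfolding S2_def
      proof (rule run_out_inv[where I = "Inv2 n s a"])
        show "Inv2 n s a (n # S1')" unfolding Inv2_def S1s by simp
        fix st c assume i: "Inv2 n s a st" and c: "c \<in> set L2"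
        have "c < a" using L2lt c by blast
        moreover have "c \<noteq> s" using sL2 c by blast
        moreover have "a < n" using an by simp
        ultimately show "Inv2 n s a (nst TT c st)" using i sa by (intro Inv2_step)
      qed
      then show False unfolding Inv2_def
      proof (elim disjE exE conjE)
        fix T' assume S2: "S2 = T' @ [n,s,a]"
        have "\<not> mono3 [b,n,s,a]" using bn ba sa unfolding mono3_4 mono3_3 by auto
        then obtain T'' where eqn: "nst TT b S2 = b # T'' @ [n,s,a]" using nst_keep[of "[n,s,a]" b T'] S2 by auto
        have "subseq [n,a] [n,s,a]" by simp
        then have sub: "subseq [b,n,a] (b # T'' @ [n,s,a])" by (rule subseq_Cons2[OF subseq_drop_many])
        then have "subseq [b,n,a] (nst TT b S2)" unfolding eqn .
        then have "west_s y \<noteq> [1..<n+1]" unfolding yeq2 by (rule west_contra[OF _ ba bn])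
        then show False using ws' by simp
      next
        fix W u assume S2: "S2 = W @ [u,a]" and us: "u < s" and sS2: "s \<notin> set S2"
        have "\<not> mono3 [b,u,a]" using ba us sa unfolding mono3_3 by auto
        then obtain T'' where nb: "nst TT b S2 = b # T'' @ [u,a]" using nst_keep[of "[u,a]" b W] S2 by auto
        have "s \<in> set (L2 @ n # S1')" using S1s by simp
        then have "s \<in> set F2" using mset_set_eq[OF mset2] sS2 by blast
        have "subseq [u] [u,a]" by simp
        then have "subseq [b,u] (b # T'' @ [u,a])" by (rule subseq_Cons2[OF subseq_drop_many])
        then have "subseq [b,u] (nst TT b S2)" unfolding nb .
        then have "subseq [b,u] (stack_run TT L3 (nst TT b S2))" using stack_run_subseq by (rule subseq_order.trans)
        then have "subseq [b,u] (pops TT b S2 @ stack_run TT L3 (nst TT b S2))" by (rule subseq_drop_many)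
        with \<open>s \<in> set F2\<close> have "subseq [s,b,u] (F2 @ pops TT b S2 @ stack_run TT L3 (nst TT b S2))"
          by (rule subseq_cons_app)
        then have "subseq [s,b,u] ((O1 @ P1) @ (F2 @ pops TT b S2 @ stack_run TT L3 (nst TT b S2)))"
          by (rule subseq_drop_many)
        then have "subseq [s,b,u] y" unfolding yeq2 by (simp only: append_assoc)
        then show False using west231[of s b u y n] ws' us sa ba by simp
      qed
    qed
  qed
qed

end
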